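(* Let $m\ge n$, $0\le r<n$, $A^1,\dots,A^l\in\mathbb{R}^{m\times n}$, $b\in\mathbb{R}^l$, and let $X\in\mathcal{L}\cap\mathcal{M}(r)$ with $\operatorname{rank}(X)=s$ and SVD $X=U\Sigma V^\top$ as in the context. Then: (i) if Assumption 1 holds at $X$, then $\mathrm{N}^M_{\mathcal{M}(r)}(X)\cap\mathrm{N}_{\mathcal{L}}(X)=\{O\}$; (ii) if Assumption 2 holds at $X$, then for every index set $J\subseteq\{1,\dots,n\}$ with $\Gamma\subseteq J$, $\mathrm{N}_{\mathcal{M}_X(J)}(X)\cap\mathrm{N}_{\mathcal{L}}(X)=\{O\}$, where $\mathcal{M}_X(J)=\{UBV_J^\top:B\in\mathbb{R}^{m\times |J|}\}$ and $\mathrm{N}_{\mathcal{M}_X(J)}(X)=\{W: U^\top WV_J=O\}$ is its orthogonal complement.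
   Context: $\langle X,Y\rangle=\sum_{i,j}X_{ij}Y_{ij}$ on $\mathbb{R}^{m\times n}$; $O$ is the zero matrix. $\mathcal{A}(X)=(\langle A^1,X\rangle,\dots,\langle A^l,X\rangle)^\top$, $\mathcal{L}=\{X:\mathcal{A}(X)=b\}$, $\mathcal{M}(r)=\{X:\operatorname{rank}(X)\le r\}$, $\mathrm{N}_{\mathcal{L}}(X)=\{\sum_{i=1}^l y_iA^i: y\in\mathbb{R}^l\}$. SVD convention: $X=U\Sigma V^\top$ with $U$ ($m\times m$) and $V$ ($n\times n$) orthogonal, $\Sigma$ with diagonal $\sigma_1\ge\dots\ge\sigma_s>0$ followed by zeros, $\Gamma=\{1,\dots,s\}$, $\Gamma_m^\perp=\{s+1,\dots,m\}$, $\Gamma_n^\perp=\{s+1,\dots,n\}$; $U_J$, $V_J$ denote column submatrices indexed by $J$. Normal space of the fixed-rank manifold $\mathcal{M}^s=\{X:\operatorname{rank}X=s\}$: $\mathrm{N}_{\mathcal{M}^s}(X)=\{U_{\Gamma_m^\perp}DV_{\Gamma_n^\perp}^\top:D\in\mathbb{R}^{(m-s)\times(n-s)}\}$. Cones: for closed $\Omega$, $X\in\Omega$, $\mathrm{T}^B_\Omega(X)$ is the set of $\Xi$ with $X^k\in\Omega$, $X^k\to X$, $t_k\downarrow0$, $(X^k-X)/t_k\to\Xi$; $\mathrm{N}^F_\Omega(X)$ is its polar $\{Y:\langle Y,\Xi\rangle\le0\ \forall\Xi\in \mathrm{T}^B_\Omega(X)\}$; the Mordukhovich normal cone $\mathrm{N}^M_\Omega(X)$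 is the set of limits of sequences $W^k\in\mathrm{N}^F_\Omega(X^k)$ with $X^k\in\Omega$, $X^k\to X$. Define $T^i_X=\begin{bmatrix}U_\Gamma^\top A^iV_\Gamma & U_\Gamma^\top A^iV_{\Gamma_n^\perp}\\ U_{\Gamma_m^\perp}^\top A^iV_\Gamma & O\end{bmatrix}$ and $R^i_X=U^\top A^iV_\Gamma$, $i=1,\dots,l$. Assumption 1 at $X$: $T^1_X,\dots,T^l_X$ are linearly independent. Assumption 2 at $X$: $R^1_X,\dots,R^l_X$ are linearly independent. *)

theory Defs
  imports "HOL-Analysis.Analysis" "Jordan_Normal_Form.DL_Rank" "Jordan_Normal_Form.DL_Submatrix"
begin

text \<open>Matrices are Jordan_Normal_Form matrices (real mat); indices are 0-based,
so the paper's index i corresponds to i-1 here.\<close>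

definition frob :: "real mat \<Rightarrow> real mat \<Rightarrow> real" where
  "frob X Y = (\<Sum>i<dim_row X. \<Sum>j<dim_col X. X $$ (i,j) * Y $$ (i,j))"

definition mat_tendsto :: "nat \<Rightarrow> nat \<Rightarrow> (nat \<Rightarrow> real mat) \<Rightarrow> real mat \<Rightarrow> bool" where
  "mat_tendsto m n Xs X \<longleftrightarrow> (\<forall>k. Xs k \<in> carrier_mat m n) \<and> X \<in> carrier_mat m n \<and>
     (\<forall>i<m. \<forall>j<n. (\<lambda>k. Xs k $$ (i,j)) \<longlonglongrightarrow> X $$ (i,j))"

definition bouligand_tangent :: "nat \<Rightarrow> nat \<Rightarrow> real mat set \<Rightarrow> real mat \<Rightarrow> real mat set" where
  "bouligand_tangent m n \<Omega> X = {\<Xi> \<in> carrier_mat m n. \<exists>Xs t.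
      (\<forall>k. Xs k \<in> \<Omega>) \<and> mat_tendsto m n Xs X \<and> (\<forall>k. t k > 0) \<and> t \<longlonglongrightarrow> 0 \<and>
      mat_tendsto m n (\<lambda>k. (1 / t k) \<cdot>\<^sub>m (Xs k - X)) \<Xi>}"

definition frechet_normal :: "nat \<Rightarrow> nat \<Rightarrow> real mat set \<Rightarrow> real mat \<Rightarrow> real mat set" where
  "frechet_normal m n \<Omega> X = {Y \<in> carrier_mat m n. \<forall>\<Xi> \<in> bouligand_tangent m n \<Omega> X. frob Y \<Xi> \<le> 0}"

definition mordukhovich_normal :: "nat \<Rightarrow> nat \<Rightarrow> real mat set \<Rightarrow> real mat \<Rightarrow> real mat set" where
  "mordukhovich_normal m n \<Omega> X = {W \<in> carrier_mat m n. \<exists>Xs Ws.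
      (\<forall>k. Xs k \<in> \<Omega>) \<and> mat_tendsto m n Xs X \<and>
      (\<forall>k. Ws k \<in> frechet_normal m n \<Omega> (Xs k)) \<and> mat_tendsto m n Ws W}"

definition mrank :: "real mat \<Rightarrow> nat" where
  "mrank X = vec_space.rank (dim_row X) X"

definition low_rank_set :: "nat \<Rightarrow> nat \<Rightarrow> nat \<Rightarrow> real mat set" where
  "low_rank_set m n r = {X \<in> carrier_mat m n. mrank X \<le> r}"

text \<open>Affine set L = {X : A(X) = b}, with A^1..A^l given as A 0 .. A (l-1).\<close>
definition affine_set :: "nat \<Rightarrow> nat \<Rightarrow> nat \<Rightarrow> (nat \<Rightarrow> real mat) \<Rightarrow> (nat \<Rightarrow> real) \<Rightarrow> real mat set" where
  "affine_set m n l A b = {X \<in> carrier_mat m n. \<forall>i<l. frob (A i) X = b i}"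

definition normal_L :: "nat \<Rightarrow> nat \<Rightarrow> nat \<Rightarrow> (nat \<Rightarrow> real mat) \<Rightarrow> real mat set" where
  "normal_L m n l A = {W \<in> carrier_mat m n. \<exists>y :: nat \<Rightarrow> real.
      \<forall>p<m. \<forall>q<n. W $$ (p,q) = (\<Sum>i<l. y i * A i $$ (p,q))}"

definition mats_lin_indep :: "nat \<Rightarrow> nat \<Rightarrow> nat \<Rightarrow> (nat \<Rightarrow> real mat) \<Rightarrow> bool" where
  "mats_lin_indep p q l T \<longleftrightarrow> (\<forall>c :: nat \<Rightarrow> real.
      (\<forall>a<p. \<forall>b<q. (\<Sum>i<l. c i * T i $$ (a,b)) = 0) \<longrightarrow> (\<forall>i<l. c i = 0))"

definition cols_sub :: "real mat \<Rightarrow> nat set \<Rightarrow> real mat" where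
  "cols_sub M J = submatrix M {0..<dim_row M} J"

text \<open>T^i_X as a 2x2 block matrix, with Gamma = {0..<s}.\<close>
definition T_mat :: "nat \<Rightarrow> nat \<Rightarrow> nat \<Rightarrow> real mat \<Rightarrow> real mat \<Rightarrow> real mat \<Rightarrow> real mat" where
  "T_mat m n s U V Ai = four_block_mat
     (transpose_mat (cols_sub U {0..<s}) * Ai * cols_sub V {0..<s})
     (transpose_mat (cols_sub U {0..<s}) * Ai * cols_sub V {s..<n})
     (transpose_mat (cols_sub U {s..<m}) * Ai * cols_sub V {0..<s})
     (0\<^sub>m (m - s) (n - s))"

definition R_mat :: "nat \<Rightarrow> real mat \<Rightarrow> real mat \<Rightarrow> real mat \<Rightarrow> real mat" where
  "R_mat s U V Ai = transpose_mat U * Ai * cols_sub V {0..<s}"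

definition is_svd :: "nat \<Rightarrow> nat \<Rightarrow> nat \<Rightarrow> real mat \<Rightarrow> real mat \<Rightarrow> real mat \<Rightarrow> real mat \<Rightarrow> bool" where
  "is_svd m n s X U S V \<longleftrightarrow>
     U \<in> carrier_mat m m \<and> transpose_mat U * U = 1\<^sub>m m \<and> U * transpose_mat U = 1\<^sub>m m \<and>
     V \<in> carrier_mat n n \<and> transpose_mat V * V = 1\<^sub>m n \<and> V * transpose_mat V = 1\<^sub>m n \<and>
     S \<in> carrier_mat m n \<and> (\<forall>i<m. \<forall>j<n. i \<noteq> j \<longrightarrow> S $$ (i,j) = 0) \<and>
     (\<forall>i<s. S $$ (i,i) > 0) \<and> (\<forall>i. i + 1 < s \<longrightarrow> S $$ (i,i) \<ge> S $$ (i+1,i+1)) \<and>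
     (\<forall>i. s \<le> i \<and> i < min m n \<longrightarrow> S $$ (i,i) = 0) \<and>
     X = U * S * transpose_mat V"

definition normal_MXJ :: "nat \<Rightarrow> nat \<Rightarrow> real mat \<Rightarrow> real mat \<Rightarrow> nat set \<Rightarrow> real mat set" where
  "normal_MXJ m n U V J = {W \<in> carrier_mat m n.
      transpose_mat U * W * cols_sub V J = 0\<^sub>m m (card J)}"

end

theory Submission
  imports Defs
begin

lemma (in vec_space) rank_mult_le:
  assumes A: "A \<in> carrier_mat n nc" and B: "B \<in> carrier_mat nc k"
  shows "rank (A * B) \<le> rank A"
proof -
  define W where "W = span (set (cols A))"
  have sub: "set (cols (A * B)) \<subseteq> W"
  proof
    fix x assume "x \<in> set (cols (A * B))"
    then obtain j where j: "j < dim_col (A*B)" "x = col (A*B) j"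
      by (metis cols_length cols_nth in_set_conv_nth)
    have "x = A *\<^sub>v col B j" using j A B by auto
    moreover have "col B j \<in> carrier_vec (dim_col A)" using A B j by auto
    ultimately have "x \<in> col_space A" using col_space_eq[OF A] A by auto
    then show "x \<in> W" unfolding W_def col_space_def .
  qed
  have AB: "A * B \<in> carrier_mat n k" using A B by auto
  have WS: "subspace class_ring W V"
    unfolding W_def using A by (metis cols_dim carrier_matD(1) span_is_subspace)
  have "span (set (cols (A * B))) \<subseteq> W"
    using sub WS by (simp add: span_is_subset subspace_def)
  have S2: "subspace class_ring (span (set (cols (A * B)))) V"
    by (metis AB cols_dim carrier_matD(1) span_is_subspace)
  have subspace: "subspace class_ring (span (set (cols (A * B)))) (vs W)"
    using nested_subspaces[OF WS S2 \<open>span (set (cols (A * B))) \<subseteq> W\<close>] .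
  have fW: "vectorspace.fin_dim class_ring (vs W)" using W_def A fin_dim_span_cols by auto
  have "vectorspace.fin_dim class_ring (span_vs (set (cols (A * B))))" using AB vec_space.fin_dim_span_cols by blast
  then show ?thesis unfolding rank_def
    using vectorspace.subspace_dim[OF subspace_is_vs[OF WS] subspace fW] W_def by auto
qed

lemma (in vec_space) rank_mult_left_le:
  assumes A: "A \<in> carrier_mat n nc" and B: "B \<in> carrier_mat n n"
  shows "rank (B * A) \<le> rank A"
proof -
  define SA where "SA = span (set (cols A))"
  define SB where "SB = span (set (cols (B * A)))"
  have BA: "B * A \<in> carrier_mat n nc" using A B by auto
  have cA: "SA = {y\<in>carrier_vec n. \<exists>x\<in>carrier_vec nc. A *\<^sub>v x = y}"
    using col_space_eq[OF A] A unfolding SA_def col_space_def by auto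
  have cB: "SB = {y\<in>carrier_vec n. \<exists>x\<in>carrier_vec nc. (B * A) *\<^sub>v x = y}"
    using col_space_eq[OF BA] BA A B unfolding SB_def col_space_def by auto
  have img: "(\<lambda>x. B *\<^sub>v x) ` SA = SB"
  proof
    show "(\<lambda>x. B *\<^sub>v x) ` SA \<subseteq> SB"
      using A B by (auto simp: cA cB assoc_mult_mat_vec)
    show "SB \<subseteq> (\<lambda>x. B *\<^sub>v x) ` SA"
    proof
      fix y assume "y \<in> SB"
      then obtain x where x: "x \<in> carrier_vec nc" "y = (B * A) *\<^sub>v x" using cB by auto
      then have "y = B *\<^sub>v (A *\<^sub>v x)" using A B by (simp add: assoc_mult_mat_vec)
      moreover have "A *\<^sub>v x \<in> SA" using cA x A by auto
      ultimately show "y \<in> (\<lambda>x. B *\<^sub>v x) ` SA" by blast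
    qed
  qed
  have sA: "subspace class_ring SA V" unfolding SA_def using A
    by (metis cols_dim carrier_matD(1) span_is_subspace)
  have sB: "subspace class_ring SB V" unfolding SB_def using BA
    by (metis cols_dim carrier_matD(1) span_is_subspace)
  have vA: "vectorspace class_ring (vs SA)" using sA subspace_is_vs by auto
  have vB: "vectorspace class_ring (vs SB)" using sB subspace_is_vs by auto
  have SAc: "SA \<subseteq> carrier_vec n" using sA unfolding subspace_def submodule_def by auto
  have hom: "(\<lambda>x. B *\<^sub>v x) \<in> module_hom class_ring (vs SA) (vs SB)"
    unfolding module_hom_def
  proof (intro CollectI conjI allI impI)
    show "(\<lambda>x. B *\<^sub>v x) \<in> carrier (vs SA) \<rightarrow> carrier (vs SB)" using img by auto
    fix m1 m2 assume "m1 \<in> carrier (vs SA) \<and> m2 \<in> carrier (vs SA)"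
    then show "B *\<^sub>v (m1 \<oplus>\<^bsub>vs SA\<^esub> m2) = (B *\<^sub>v m1) \<oplus>\<^bsub>vs SB\<^esub> (B *\<^sub>v m2)"
      using SAc B by (auto intro: mult_add_distrib_mat_vec)
  next
    fix r :: 'a and m assume "r \<in> carrier class_ring \<and> m \<in> carrier (vs SA)"
    then show "B *\<^sub>v (r \<odot>\<^bsub>vs SA\<^esub> m) = r \<odot>\<^bsub>vs SB\<^esub> (B *\<^sub>v m)"
      using SAc B by (auto simp: mult_mat_vec)
  qed
  interpret L: linear_map class_ring "vs SA" "vs SB" "\<lambda>x. B *\<^sub>v x"
    unfolding linear_map_def mod_hom_def mod_hom_axioms_def
    using vA vB hom vectorspace.axioms(1) by blast
  have fA: "vectorspace.fin_dim class_ring (vs SA)" using SA_def A fin_dim_span_cols by auto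
  have "vectorspace.dim class_ring ((vs SB)\<lparr>carrier := L.imT\<rparr>) + vectorspace.dim class_ring ((vs SA)\<lparr>carrier := L.kerT\<rparr>) = vectorspace.dim class_ring (vs SA)"
    using L.rank_nullity_main(1)[OF fA] .
  moreover have "L.imT = SB" using L.surj_imp_imT_carrier img by auto
  ultimately have "vectorspace.dim class_ring (vs SB) \<le> vectorspace.dim class_ring (vs SA)"
    by auto
  then show ?thesis unfolding rank_def SA_def SB_def by simp
qed

lemma tangent_ray:
  assumes Z: "Z \<in> carrier_mat m n" and D: "D \<in> carrier_mat m n"
    and ray: "\<And>t. t > 0 \<Longrightarrow> Z + t \<cdot>\<^sub>m D \<in> \<Omega>"
  shows "D \<in> bouligand_tangent m n \<Omega> Z"
proof -
  define t where "t = (\<lambda>k::nat. inverse (real (Suc k)))"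
  define Xs where "Xs = (\<lambda>k. Z + t k \<cdot>\<^sub>m D)"
  have tpos: "\<forall>k. t k > 0" unfolding t_def by auto
  have t0: "t \<longlonglongrightarrow> 0" unfolding t_def by (rule LIMSEQ_inverse_real_of_nat)
  have "\<forall>k. Xs k \<in> \<Omega>" using ray tpos unfolding Xs_def by auto
  moreover have "mat_tendsto m n Xs Z"
    unfolding mat_tendsto_def
  proof (intro conjI allI impI)
    show "Xs k \<in> carrier_mat m n" for k using Z D unfolding Xs_def by auto
    show "Z \<in> carrier_mat m n" by fact
    fix i j assume ij: "i < m" "j < n"
    have e: "(\<lambda>k. Xs k $$ (i,j)) = (\<lambda>k. Z $$ (i,j) + t k * D $$ (i,j))"
      using Z D ij unfolding Xs_def by auto
    have "(\<lambda>k. Z $$ (i,j) + t k * D $$ (i,j)) \<longlonglongrightarrow> Z $$ (i,j) + 0 * D $$ (i,j)"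
      by (intro tendsto_intros t0)
    then show "(\<lambda>k. Xs k $$ (i,j)) \<longlonglongrightarrow> Z $$ (i,j)" unfolding e by simp
  qed
  moreover have "mat_tendsto m n (\<lambda>k. (1 / t k) \<cdot>\<^sub>m (Xs k - Z)) D"
    unfolding mat_tendsto_def
  proof (intro conjI allI impI)
    show "(1 / t k) \<cdot>\<^sub>m (Xs k - Z) \<in> carrier_mat m n" for k using Z D unfolding Xs_def by auto
    show "D \<in> carrier_mat m n" by fact
    fix i j assume ij: "i < m" "j < n"
    have e: "(\<lambda>k. ((1 / t k) \<cdot>\<^sub>m (Xs k - Z)) $$ (i,j)) = (\<lambda>k. D $$ (i,j))"
      using Z D ij tpos unfolding Xs_def by (auto simp: field_simps intro!: ext) (metis less_irrefl)
    show "(\<lambda>k. ((1 / t k) \<cdot>\<^sub>m (Xs k - Z)) $$ (i,j)) \<longlonglongrightarrow> D $$ (i,j)" unfolding e by simp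
  qed
  ultimately show ?thesis unfolding bouligand_tangent_def using D tpos t0 by blast
qed

definition unitm :: "nat \<Rightarrow> nat \<Rightarrow> nat \<Rightarrow> real \<Rightarrow> real mat" where
  "unitm n a b c = mat n n (\<lambda>(i,j). if i = a \<and> j = b then c else 0)"

lemma unitm_carrier[simp]: "unitm n a b c \<in> carrier_mat n n"
  unfolding unitm_def by auto

lemma mult_unitm_index:
  assumes Z: "Z \<in> carrier_mat m n" and a: "a < n" and i: "i < m" and j: "j < n"
  shows "(Z * unitm n a b c) $$ (i,j) = (if j = b then Z $$ (i,a) * c else 0)"
proof -
  have "(Z * unitm n a b c) $$ (i,j) = (\<Sum>q<n. Z $$ (i,q) * (if q = a \<and> j = b then c else 0))"
    using Z i j by (simp add: unitm_def scalar_prod_def atLeast0LessThan)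
  also have "\<dots> = (\<Sum>q<n. if q = a then (if j = b then Z $$ (i,a) * c else 0) else 0)"
    by (rule sum.cong) auto
  also have "\<dots> = (if j = b then Z $$ (i,a) * c else 0)" using a by simp
  finally show ?thesis .
qed

lemma unitm_mult_index:
  assumes Z: "Z \<in> carrier_mat m n" and b: "b < m" and i: "i < m" and j: "j < n"
  shows "(unitm m a b c * Z) $$ (i,j) = (if i = a then c * Z $$ (b,j) else 0)"
proof -
  have "(unitm m a b c * Z) $$ (i,j) = (\<Sum>q<m. (if i = a \<and> q = b then c else 0) * Z $$ (q,j))"
    using Z i j by (simp add: unitm_def scalar_prod_def atLeast0LessThan)
  also have "\<dots> = (\<Sum>q<m. if q = b then (if i = a then c * Z $$ (b,j) else 0) else 0)"
    by (rule sum.cong) auto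
  also have "\<dots> = (if i = a then c * Z $$ (b,j) else 0)" using b by simp
  finally show ?thesis .
qed

lemma mrank_mult_right:
  assumes Z: "Z \<in> carrier_mat m n" and M: "M \<in> carrier_mat n n"
  shows "mrank (Z * M) \<le> mrank Z"
  using vec_space.rank_mult_le[OF Z M] Z M unfolding mrank_def by auto

lemma mrank_mult_left:
  assumes Z: "Z \<in> carrier_mat m n" and M: "M \<in> carrier_mat m m"
  shows "mrank (M * Z) \<le> mrank Z"
  using vec_space.rank_mult_left_le[OF Z M] Z M unfolding mrank_def by auto

lemma frechet_right:
  assumes Z: "Z \<in> low_rank_set m n r"
    and Y: "Y \<in> frechet_normal m n (low_rank_set m n r) Z" and a: "a < n" and b: "b < n"
  shows "(\<Sum>i<m. Z $$ (i,a) * Y $$ (i,b)) = 0"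
proof -
  have Zc: "Z \<in> carrier_mat m n" and Zr: "mrank Z \<le> r" using Z unfolding low_rank_set_def by auto
  have Yc: "Y \<in> carrier_mat m n" using Y unfolding frechet_normal_def by auto
  have key: "c * (\<Sum>i<m. Z $$ (i,a) * Y $$ (i,b)) \<le> 0" for c
  proof -
    let ?E = "unitm n a b c"
    have "Z * ?E \<in> bouligand_tangent m n (low_rank_set m n r) Z"
    proof (rule tangent_ray[OF Zc])
      show "Z * ?E \<in> carrier_mat m n" using Zc by auto
      fix t :: real assume "t > 0"
      have "Z * (1\<^sub>m n + t \<cdot>\<^sub>m ?E) = Z * 1\<^sub>m n + Z * (t \<cdot>\<^sub>m ?E)"
        using Zc by (intro mult_add_distrib_mat) auto
      then have eq: "Z + t \<cdot>\<^sub>m (Z * ?E) = Z * (1\<^sub>m n + t \<cdot>\<^sub>m ?E)"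
        using Zc by (simp add: mult_smult_distrib[OF Zc unitm_carrier] right_mult_one_mat[OF Zc])
      have "Z * (1\<^sub>m n + t \<cdot>\<^sub>m ?E) \<in> carrier_mat m n" using Zc by auto
      moreover have "mrank (Z * (1\<^sub>m n + t \<cdot>\<^sub>m ?E)) \<le> r"
        using mrank_mult_right[OF Zc, of "1\<^sub>m n + t \<cdot>\<^sub>m ?E"] Zr by auto
      ultimately show "Z + t \<cdot>\<^sub>m (Z * ?E) \<in> low_rank_set m n r"
        unfolding eq low_rank_set_def by auto
    qed
    then have "frob Y (Z * ?E) \<le> 0" using Y unfolding frechet_normal_def by auto
    moreover have "frob Y (Z * ?E) = c * (\<Sum>i<m. Z $$ (i,a) * Y $$ (i,b))"
    proof -
      have "frob Y (Z * ?E) = (\<Sum>i<m. \<Sum>j<n. Y $$ (i,j) * (if j = b then Z $$ (i,a) * c else 0))"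
        unfolding frob_def using Yc Zc a by (auto simp: mult_unitm_index intro!: sum.cong)
      also have "\<dots> = (\<Sum>i<m. Y $$ (i,b) * (Z $$ (i,a) * c))"
        using b by (simp add: if_distrib cong: if_cong)
      also have "\<dots> = c * (\<Sum>i<m. Z $$ (i,a) * Y $$ (i,b))"
        by (simp add: sum_distrib_left mult_ac)
      finally show ?thesis .
    qed
    ultimately show ?thesis by simp
  qed
  from key[of 1] key[of "-1"] show ?thesis by simp
qed

lemma frechet_left:
  assumes Z: "Z \<in> low_rank_set m n r"
    and Y: "Y \<in> frechet_normal m n (low_rank_set m n r) Z" and a: "a < m" and b: "b < m"
  shows "(\<Sum>j<n. Y $$ (a,j) * Z $$ (b,j)) = 0"
proof -
  have Zc: "Z \<in> carrier_mat m n" and Zr: "mrank Z \<le> r" using Z unfolding low_rank_set_def by auto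
  have Yc: "Y \<in> carrier_mat m n" using Y unfolding frechet_normal_def by auto
  have key: "c * (\<Sum>j<n. Y $$ (a,j) * Z $$ (b,j)) \<le> 0" for c
  proof -
    let ?E = "unitm m a b c"
    have "?E * Z \<in> bouligand_tangent m n (low_rank_set m n r) Z"
    proof (rule tangent_ray[OF Zc])
      show "?E * Z \<in> carrier_mat m n" using Zc unitm_carrier by (rule mult_carrier_mat[rotated])
      fix t :: real assume "t > 0"
      have "(1\<^sub>m m + t \<cdot>\<^sub>m ?E) * Z = 1\<^sub>m m * Z + (t \<cdot>\<^sub>m ?E) * Z"
        using Zc by (intro add_mult_distrib_mat) auto
      then have eq: "Z + t \<cdot>\<^sub>m (?E * Z) = (1\<^sub>m m + t \<cdot>\<^sub>m ?E) * Z"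
        using Zc by (simp add: left_mult_one_mat[OF Zc] mult_smult_assoc_mat[OF unitm_carrier Zc])
      have "(1\<^sub>m m + t \<cdot>\<^sub>m ?E) * Z \<in> carrier_mat m n" using Zc by (intro mult_carrier_mat[of _ m m]) auto
      moreover have "mrank ((1\<^sub>m m + t \<cdot>\<^sub>m ?E) * Z) \<le> r"
        using mrank_mult_left[OF Zc, of "1\<^sub>m m + t \<cdot>\<^sub>m ?E"] Zr by auto
      ultimately show "Z + t \<cdot>\<^sub>m (?E * Z) \<in> low_rank_set m n r"
        unfolding eq low_rank_set_def by auto
    qed
    then have "frob Y (?E * Z) \<le> 0" using Y unfolding frechet_normal_def by auto
    moreover have "frob Y (?E * Z) = c * (\<Sum>j<n. Y $$ (a,j) * Z $$ (b,j))"
    proof -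
      have "frob Y (?E * Z) = (\<Sum>i<m. \<Sum>j<n. Y $$ (i,j) * (if i = a then c * Z $$ (b,j) else 0))"
        unfolding frob_def using Yc Zc b by (auto simp: unitm_mult_index intro!: sum.cong)
      also have "\<dots> = (\<Sum>i<m. if i = a then (\<Sum>j<n. Y $$ (a,j) * (c * Z $$ (b,j))) else 0)"
        by (rule sum.cong) auto
      also have "\<dots> = c * (\<Sum>j<n. Y $$ (a,j) * Z $$ (b,j))"
        using a by (simp add: sum_distrib_left mult_ac)
      finally show ?thesis .
    qed
    ultimately show ?thesis by simp
  qed
  from key[of 1] key[of "-1"] show ?thesis by simp
qed

lemma mord_conditions:
  assumes W: "W \<in> mordukhovich_normal m n (low_rank_set m n r) X"
  shows "\<forall>a<n. \<forall>b<n. (\<Sum>i<m. X $$ (i,a) * W $$ (i,b)) = 0"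
    and "\<forall>a<m. \<forall>b<m. (\<Sum>j<n. W $$ (a,j) * X $$ (b,j)) = 0"
proof -
  obtain Xs Ws where Xs: "\<forall>k. Xs k \<in> low_rank_set m n r" and XT: "mat_tendsto m n Xs X"
    and Ws: "\<forall>k. Ws k \<in> frechet_normal m n (low_rank_set m n r) (Xs k)" and WT: "mat_tendsto m n Ws W"
    using W unfolding mordukhovich_normal_def by blast
  show "\<forall>a<n. \<forall>b<n. (\<Sum>i<m. X $$ (i,a) * W $$ (i,b)) = 0"
  proof (intro allI impI)
    fix a b assume a: "a < n" and b: "b < n"
    have "(\<lambda>k. \<Sum>i<m. Xs k $$ (i,a) * Ws k $$ (i,b)) \<longlonglongrightarrow> (\<Sum>i<m. X $$ (i,a) * W $$ (i,b))"
      using XT WT a b unfolding mat_tendsto_def by (intro tendsto_intros) auto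
    moreover have "(\<lambda>k. \<Sum>i<m. Xs k $$ (i,a) * Ws k $$ (i,b)) = (\<lambda>k. 0)"
      using frechet_right[OF Xs[rule_format] Ws[rule_format] a b] by (intro ext) simp
    ultimately show "(\<Sum>i<m. X $$ (i,a) * W $$ (i,b)) = 0"
      using LIMSEQ_unique tendsto_const by metis
  qed
  show "\<forall>a<m. \<forall>b<m. (\<Sum>j<n. W $$ (a,j) * X $$ (b,j)) = 0"
  proof (intro allI impI)
    fix a b assume a: "a < m" and b: "b < m"
    have "(\<lambda>k. \<Sum>j<n. Ws k $$ (a,j) * Xs k $$ (b,j)) \<longlonglongrightarrow> (\<Sum>j<n. W $$ (a,j) * X $$ (b,j))"
      using XT WT a b unfolding mat_tendsto_def by (intro tendsto_intros) auto
    moreover have "(\<lambda>k. \<Sum>j<n. Ws k $$ (a,j) * Xs k $$ (b,j)) = (\<lambda>k. 0)"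
      using frechet_left[OF Xs[rule_format] Ws[rule_format] a b] by (intro ext) simp
    ultimately show "(\<Sum>j<n. W $$ (a,j) * X $$ (b,j)) = 0"
      using LIMSEQ_unique tendsto_const by metis
  qed
qed

lemma svd_kill:
  assumes svd: "is_svd m n s X U S V" and sn: "s \<le> n" and nm: "n \<le> m"
    and Wc: "W \<in> carrier_mat m n"
    and R: "\<forall>a<n. \<forall>b<n. (\<Sum>i<m. X $$ (i,a) * W $$ (i,b)) = 0"
    and L: "\<forall>a<m. \<forall>b<m. (\<Sum>j<n. W $$ (a,j) * X $$ (b,j)) = 0"
  shows "\<forall>i<s. \<forall>q<n. (transpose_mat U * W) $$ (i,q) = 0"
    and "\<forall>p<m. \<forall>i<s. (W * V) $$ (p,i) = 0"
proof -
  have U: "U \<in> carrier_mat m m" and UU: "transpose_mat U * U = 1\<^sub>m m"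
    and V: "V \<in> carrier_mat n n" and VV: "transpose_mat V * V = 1\<^sub>m n"
    and S: "S \<in> carrier_mat m n" and Sd: "\<forall>i<m. \<forall>j<n. i \<noteq> j \<longrightarrow> S $$ (i,j) = 0"
    and Sp: "\<forall>i<s. S $$ (i,i) > 0" and X: "X = U * S * transpose_mat V"
    using svd unfolding is_svd_def by auto
  have Xc: "X \<in> carrier_mat m n" using X U S V by auto
  have Ut: "transpose_mat U \<in> carrier_mat m m" and Vt: "transpose_mat V \<in> carrier_mat n n"
    and St: "transpose_mat S \<in> carrier_mat n m" using U V S by auto
  have XtE: "transpose_mat X = V * (transpose_mat S * transpose_mat U)"
  proof -
    have "transpose_mat X = transpose_mat (transpose_mat V) * transpose_mat (U * S)"
      unfolding X using U S V by (intro transpose_mult[of _ m n]) auto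
    also have "\<dots> = V * (transpose_mat S * transpose_mat U)"
      using U S by (simp add: transpose_mult[OF U S])
    finally show ?thesis .
  qed
  have X1: "transpose_mat X * W = 0\<^sub>m n n"
    using R Xc Wc by (intro eq_matI) (auto simp: scalar_prod_def atLeast0LessThan)
  have X2: "W * transpose_mat X = 0\<^sub>m m m"
    using L Xc Wc by (intro eq_matI) (auto simp: scalar_prod_def atLeast0LessThan mult.commute)
  define P where "P = transpose_mat U * W"
  define Q where "Q = W * V"
  have Pc: "P \<in> carrier_mat m n" and Qc: "Q \<in> carrier_mat m n" unfolding P_def Q_def using U V Wc by auto
  define M where "M = transpose_mat S * transpose_mat U"
  have Mc: "M \<in> carrier_mat n m" unfolding M_def using St Ut by auto
  have XtM: "transpose_mat X = V * M" unfolding M_def XtE ..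
  have SP: "transpose_mat S * P = 0\<^sub>m n n"
  proof -
    have e1: "transpose_mat V * (transpose_mat X * W) = (transpose_mat V * transpose_mat X) * W"
      by (rule assoc_mult_mat[symmetric, of _ n n _ m _ n]) (use Vt Xc Wc in auto)
    have e2: "transpose_mat V * transpose_mat X = (transpose_mat V * V) * M"
      unfolding XtM by (rule assoc_mult_mat[symmetric, of _ n n _ n _ m]) (use Vt V Mc in auto)
    have e3: "(transpose_mat V * V) * M = M" using VV Mc by simp
    have e4: "M * W = transpose_mat S * P"
      unfolding P_def M_def by (rule assoc_mult_mat[of _ n m _ m _ n]) (use St Ut Wc in auto)
    have "transpose_mat S * P = transpose_mat V * (transpose_mat X * W)"
      unfolding e1 e2 e3 e4 ..
    also have "\<dots> = 0\<^sub>m n n" unfolding X1 using Vt by simp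
    finally show ?thesis .
  qed
  have QS: "Q * transpose_mat S = 0\<^sub>m m m"
  proof -
    have e1: "W * transpose_mat X = Q * M"
      unfolding XtM Q_def by (rule assoc_mult_mat[symmetric, of _ m n _ n _ m]) (use Wc V Mc in auto)
    have e2: "Q * M * U = Q * transpose_mat S * (transpose_mat U * U)"
    proof -
      have "Q * M = Q * transpose_mat S * transpose_mat U"
        unfolding M_def by (rule assoc_mult_mat[symmetric, of _ m n _ m _ m]) (use Qc St Ut in auto)
      then have "Q * M * U = Q * transpose_mat S * transpose_mat U * U" by simp
      also have "\<dots> = Q * transpose_mat S * (transpose_mat U * U)"
        by (rule assoc_mult_mat[of _ m m _ m _ m]) (use Qc St Ut U in auto)
      finally show ?thesis .
    qed
    have e3: "Q * transpose_mat S * (transpose_mat U * U) = Q * transpose_mat S"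
      unfolding UU by (rule right_mult_one_mat) (use Qc St in auto)
    have "Q * transpose_mat S = W * transpose_mat X * U" unfolding e1 e2 e3 ..
    also have "\<dots> = 0\<^sub>m m m" unfolding X2 using U by simp
    finally show ?thesis .
  qed
  show "\<forall>i<s. \<forall>q<n. (transpose_mat U * W) $$ (i,q) = 0"
  proof (intro allI impI)
    fix i q assume i: "i < s" and q: "q < n"
    have im: "i < m" "i < n" using i sn nm by auto
    have "(transpose_mat S * P) $$ (i,q) = (\<Sum>p<m. S $$ (p,i) * P $$ (p,q))"
      using St Pc im q by (simp add: scalar_prod_def atLeast0LessThan)
    also have "\<dots> = (\<Sum>p<m. if p = i then S $$ (i,i) * P $$ (i,q) else 0)"
      using Sd im by (intro sum.cong) auto
    also have "\<dots> = S $$ (i,i) * P $$ (i,q)" using im by simp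
    finally have "S $$ (i,i) * P $$ (i,q) = 0" using SP im q by simp
    moreover have "S $$ (i,i) \<noteq> 0" using Sp i by (metis less_irrefl)
    ultimately show "(transpose_mat U * W) $$ (i,q) = 0" unfolding P_def by simp
  qed
  show "\<forall>p<m. \<forall>i<s. (W * V) $$ (p,i) = 0"
  proof (intro allI impI)
    fix p i assume p: "p < m" and i: "i < s"
    have im: "i < m" "i < n" using i sn nm by auto
    have "(Q * transpose_mat S) $$ (p,i) = (\<Sum>j<n. Q $$ (p,j) * S $$ (i,j))"
      using St Qc im p by (simp add: scalar_prod_def atLeast0LessThan)
    also have "\<dots> = (\<Sum>j<n. if j = i then Q $$ (p,i) * S $$ (i,i) else 0)"
      using Sd im by (intro sum.cong) auto
    also have "\<dots> = Q $$ (p,i) * S $$ (i,i)" using im by simp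
    finally have "Q $$ (p,i) * S $$ (i,i) = 0" using QS im p by simp
    moreover have "S $$ (i,i) \<noteq> 0" using Sp i by (metis less_irrefl)
    ultimately show "(W * V) $$ (p,i) = 0" unfolding Q_def by simp
  qed
qed

lemma pick_interval:
  assumes "j < hi - lo" shows "pick {lo..<hi} j = lo + j"
proof -
  have "{a \<in> {lo..<hi}. a < lo + j} = {lo..<lo+j}" using assms by auto
  then have "card {a \<in> {lo..<hi}. a < lo + j} = j" by simp
  then show ?thesis using pick_card_in_set[of "lo + j" "{lo..<hi}"] assms by auto
qed

lemma pick_prefix:
  assumes "{0..<s} \<subseteq> J" "k < s" shows "pick J k = k"
proof -
  have "{a \<in> J. a < k} = {0..<k}" using assms by auto
  then have "card {a \<in> J. a < k} = k" by simp
  then show ?thesis using pick_card_in_set[of k J] assms by auto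
qed

lemma cols_sub_dims:
  assumes "M \<in> carrier_mat p q"
  shows "dim_row (cols_sub M I) = p" "dim_col (cols_sub M I) = card {j. j < q \<and> j \<in> I}"
  using assms unfolding cols_sub_def by (auto simp: dim_submatrix)

lemma cols_sub_index:
  assumes M: "M \<in> carrier_mat p q" and i: "i < p" and j: "j < card {j. j < q \<and> j \<in> I}"
  shows "cols_sub M I $$ (i,j) = M $$ (i, pick I j)"
proof -
  have "pick {0..<p} i = i" using pick_interval[of i p 0] i by simp
  moreover have "i < card {i. i < dim_row M \<and> i \<in> {0..<p}}" using M i by simp
  ultimately show ?thesis unfolding cols_sub_def using submatrix_index[of i M "{0..<p}" j I] M j by auto
qed

lemma card_interval_cols: "hi \<le> q \<Longrightarrow> card {j. j < q \<and> j \<in> {lo..<hi}} = hi - lo"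
proof -
  assume "hi \<le> q"
  then have "{j. j < q \<and> j \<in> {lo..<hi}} = {lo..<hi}" by auto
  then show ?thesis by simp
qed

lemma card_J_cols: "J \<subseteq> {0..<q} \<Longrightarrow> card {j. j < q \<and> j \<in> J} = card J"
proof -
  assume "J \<subseteq> {0..<q}"
  then have "{j. j < q \<and> j \<in> J} = J" by auto
  then show ?thesis by simp
qed

lemma cols_sub_int_carrier:
  assumes M: "M \<in> carrier_mat p q" and h: "hi \<le> q"
  shows "cols_sub M {lo..<hi} \<in> carrier_mat p (hi - lo)"
proof (rule carrier_matI)
  show "dim_row (cols_sub M {lo..<hi}) = p" by (rule cols_sub_dims(1)[OF M])
  have "dim_col (cols_sub M {lo..<hi}) = card {j. j < q \<and> j \<in> {lo..<hi}}" by (rule cols_sub_dims(2)[OF M])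
  also have "\<dots> = hi - lo" by (rule card_interval_cols[OF h])
  finally show "dim_col (cols_sub M {lo..<hi}) = hi - lo" .
qed

lemma cols_sub_int_index:
  assumes M: "M \<in> carrier_mat p q" and h: "hi \<le> q" and i: "i < p" and j: "j < hi - lo"
  shows "cols_sub M {lo..<hi} $$ (i,j) = M $$ (i, lo + j)"
proof -
  have "j < card {j. j < q \<and> j \<in> {lo..<hi}}" unfolding card_interval_cols[OF h] by (rule j)
  from cols_sub_index[OF M i this] show ?thesis unfolding pick_interval[OF j] .
qed

lemma prod_sub_index:
  assumes U: "U \<in> carrier_mat m m'" and U': "U' \<in> carrier_mat m k"
    and Ue: "\<forall>p<m. U' $$ (p,a) = U $$ (p,a')" and a: "a < k" and a': "a' < m'"
    and V: "V \<in> carrier_mat n n'" and V': "V' \<in> carrier_mat n k'"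
    and Ve: "\<forall>q<n. V' $$ (q,b) = V $$ (q,b')" and b: "b < k'" and b': "b' < n'"
    and A: "A \<in> carrier_mat m n"
  shows "(transpose_mat U' * A * V') $$ (a,b) = (transpose_mat U * A * V) $$ (a',b')"
proof -
  have "(transpose_mat U' * A * V') $$ (a,b) = (\<Sum>p<m. U' $$ (p,a) * (\<Sum>q<n. A $$ (p,q) * V' $$ (q,b)))"
    using U' A V' a b by (simp add: scalar_prod_def atLeast0LessThan)
  also have "\<dots> = (\<Sum>p<m. U $$ (p,a') * (\<Sum>q<n. A $$ (p,q) * V $$ (q,b')))"
    using Ue Ve by simp
  also have "\<dots> = (transpose_mat U * A * V) $$ (a',b')"
    using U A V a' b' by (simp add: scalar_prod_def atLeast0LessThan)
  finally show ?thesis .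
qed

lemma T_mat_index:
  assumes U: "U \<in> carrier_mat m m" and V: "V \<in> carrier_mat n n" and A: "A \<in> carrier_mat m n"
    and sn: "s \<le> n" and nm: "n \<le> m" and a: "a < m" and b: "b < n"
  shows "T_mat m n s U V A $$ (a,b) = (if a < s \<or> b < s then (transpose_mat U * A * V) $$ (a,b) else 0)"
proof -
  let ?U1 = "cols_sub U {0..<s}" and ?U2 = "cols_sub U {s..<m}"
  let ?V1 = "cols_sub V {0..<s}" and ?V2 = "cols_sub V {s..<n}"
  have U1: "?U1 \<in> carrier_mat m s" using cols_sub_int_carrier[OF U, of s 0] sn nm by simp
  have U2: "?U2 \<in> carrier_mat m (m - s)" using cols_sub_int_carrier[OF U, of m s] by simp
  have V1: "?V1 \<in> carrier_mat n s" using cols_sub_int_carrier[OF V, of s 0] sn by simp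
  have V2: "?V2 \<in> carrier_mat n (n - s)" using cols_sub_int_carrier[OF V, of n s] by simp
  have U1e: "\<forall>p<m. ?U1 $$ (p,a) = U $$ (p,a)" if "a < s" for a
    using cols_sub_int_index[OF U, of s _ a 0] that sn nm by simp
  have U2e: "\<forall>p<m. ?U2 $$ (p,a - s) = U $$ (p,a)" if "s \<le> a" "a < m" for a
    using cols_sub_int_index[OF U, of m _ "a - s" s] that by simp
  have V1e: "\<forall>q<n. ?V1 $$ (q,b) = V $$ (q,b)" if "b < s" for b
    using cols_sub_int_index[OF V, of s _ b 0] that sn by simp
  have V2e: "\<forall>q<n. ?V2 $$ (q,b - s) = V $$ (q,b)" if "s \<le> b" "b < n" for b
    using cols_sub_int_index[OF V, of n _ "b - s" s] that by simp
  have d1: "dim_row (transpose_mat ?U1 * A * ?V1) = s" "dim_col (transpose_mat ?U1 * A * ?V1) = s"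
    using U1 V1 by auto
  have d2: "dim_row (0\<^sub>m (m - s) (n - s) :: real mat) = m - s" "dim_col (0\<^sub>m (m - s) (n - s) :: real mat) = n - s"
    by auto
  have ab: "a < s + (m - s)" "b < s + (n - s)" using a b sn nm by auto
  show ?thesis
  proof (cases "a < s")
    case True
    note as = True
    show ?thesis
    proof (cases "b < s")
      case True
      then show ?thesis unfolding T_mat_def using ab d1 d2 as
        prod_sub_index[OF U U1 U1e[OF as] as a V V1 V1e[OF True] True b A] by simp
    next
      case False
      have bs: "s \<le> b" "b - s < n - s" using b False by auto
      show ?thesis unfolding T_mat_def using ab d1 d2 as False
        prod_sub_index[OF U U1 U1e[OF as] as a V V2 V2e[OF bs(1) b] bs(2) b A] b by simp
    qed
  next
    case False
    note as = False
    have as': "a - s < m - s" using a False by auto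
    show ?thesis
    proof (cases "b < s")
      case True
      have asg: "s \<le> a" using as by simp
      show ?thesis unfolding T_mat_def using ab d1 d2 as True
        prod_sub_index[OF U U2 U2e[OF asg a] as' a V V1 V1e[OF True] True b A] a by simp
    next
      case False
      then show ?thesis unfolding T_mat_def using ab d1 d2 as by simp
    qed
  qed
qed



lemma mult_index_sum:
  assumes "A \<in> carrier_mat p k" "B \<in> carrier_mat k q" "i < p" "j < q"
  shows "(A * B) $$ (i,j) = (\<Sum>t<k. A $$ (i,t) * B $$ (t,j))"
  using assms by (simp add: scalar_prod_def atLeast0LessThan)

lemma lin_entry:
  fixes U V W :: "real mat" and A :: "nat \<Rightarrow> real mat" and y :: "nat \<Rightarrow> real" and l :: nat
  assumes U: "U \<in> carrier_mat m m" and V: "V \<in> carrier_mat n n"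
    and Wc: "W \<in> carrier_mat m n" and A: "\<forall>i<l. A i \<in> carrier_mat m n"
    and Wy: "\<forall>p<m. \<forall>q<n. W $$ (p,q) = (\<Sum>i<l. y i * A i $$ (p,q))"
    and a: "a < m" and b: "b < n"
  shows "(transpose_mat U * W * V) $$ (a,b) = (\<Sum>i<l. y i * (transpose_mat U * A i * V) $$ (a,b))"
proof -
  have "(transpose_mat U * W * V) $$ (a,b) = (\<Sum>p<m. U $$ (p,a) * (\<Sum>q<n. W $$ (p,q) * V $$ (q,b)))"
    using U V Wc a b by (simp add: scalar_prod_def atLeast0LessThan)
  also have "\<dots> = (\<Sum>p<m. U $$ (p,a) * (\<Sum>q<n. (\<Sum>i<l. y i * A i $$ (p,q)) * V $$ (q,b)))"
    using Wy by simp
  also have "\<dots> = (\<Sum>p<m. \<Sum>q<n. U $$ (p,a) * ((\<Sum>i<l. y i * A i $$ (p,q)) * V $$ (q,b)))"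
    by (simp add: sum_distrib_left)
  also have "\<dots> = (\<Sum>p<m. \<Sum>q<n. \<Sum>i<l. y i * (U $$ (p,a) * (A i $$ (p,q) * V $$ (q,b))))"
    apply (intro sum.cong refl)
    apply (simp add: sum_distrib_left sum_distrib_right)
    apply (intro sum.cong refl)
    apply (simp add: mult_ac)
    done
  also have "\<dots> = (\<Sum>p<m. \<Sum>i<l. \<Sum>q<n. y i * (U $$ (p,a) * (A i $$ (p,q) * V $$ (q,b))))"
    by (rule sum.cong[OF refl], rule sum.swap)
  also have "\<dots> = (\<Sum>i<l. \<Sum>p<m. \<Sum>q<n. y i * (U $$ (p,a) * (A i $$ (p,q) * V $$ (q,b))))"
    by (rule sum.swap)
  also have "\<dots> = (\<Sum>i<l. y i * (\<Sum>p<m. U $$ (p,a) * (\<Sum>q<n. A i $$ (p,q) * V $$ (q,b))))"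
    by (simp add: sum_distrib_left sum_distrib_right mult_ac)
  also have "\<dots> = (\<Sum>i<l. y i * (transpose_mat U * A i * V) $$ (a,b))"
  proof (intro sum.cong refl)
    fix i assume "i \<in> {..<l}"
    then have Ai: "A i \<in> carrier_mat m n" using A by auto
    show "y i * (\<Sum>p<m. U $$ (p,a) * (\<Sum>q<n. A i $$ (p,q) * V $$ (q,b))) = y i * (transpose_mat U * A i * V) $$ (a,b)"
      using U V Ai a b by (simp add: scalar_prod_def atLeast0LessThan)
  qed
  finally show ?thesis .
qed

lemma zero_in_mord:
  assumes "X \<in> \<Omega>" "X \<in> carrier_mat m n"
  shows "0\<^sub>m m n \<in> mordukhovich_normal m n \<Omega> X"
proof -
  have "0\<^sub>m m n \<in> frechet_normal m n \<Omega> X"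
    unfolding frechet_normal_def frob_def by auto
  moreover have "mat_tendsto m n (\<lambda>k. X) X" "mat_tendsto m n (\<lambda>k. 0\<^sub>m m n) (0\<^sub>m m n)"
    using assms unfolding mat_tendsto_def by auto
  ultimately show ?thesis unfolding mordukhovich_normal_def mem_Collect_eq
    apply (intro conjI)
     apply simp
    apply (rule exI[where x="\<lambda>k. X"], rule exI[where x="\<lambda>k. 0\<^sub>m m n"])
    using assms by auto
qed

lemma zero_in_normal_L: "0\<^sub>m m n \<in> normal_L m n l A"
  unfolding normal_L_def by (auto intro!: exI[of _ "\<lambda>_. 0"])

theorem proposition3p1:
  fixes m n l r s :: nat and A :: "nat \<Rightarrow> real mat" and b :: "nat \<Rightarrow> real"
    and X U S V :: "real mat"
  assumes "m \<ge> n" and "r < n"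
    and "\<forall>i<l. A i \<in> carrier_mat m n"
    and "X \<in> affine_set m n l A b \<inter> low_rank_set m n r"
    and "mrank X = s"
    and "is_svd m n s X U S V"
  shows "(mats_lin_indep m n l (\<lambda>i. T_mat m n s U V (A i)) \<longrightarrow>
            mordukhovich_normal m n (low_rank_set m n r) X \<inter> normal_L m n l A = {0\<^sub>m m n})
       \<and> (mats_lin_indep m s l (\<lambda>i. R_mat s U V (A i)) \<longrightarrow>
            (\<forall>J. J \<subseteq> {0..<n} \<and> {0..<s} \<subseteq> J \<longrightarrow>
               normal_MXJ m n U V J \<inter> normal_L m n l A = {0\<^sub>m m n}))"
proof -
  note nm = assms(1) and Ac = assms(3) and svd = assms(6)
  have Xlr: "X \<in> low_rank_set m n r" using assms(4) by auto
  have Xc: "X \<in> carrier_mat m n" and sr: "s \<le> r" using Xlr assms(5) unfolding low_rank_set_def by auto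
  have sn: "s \<le> n" using sr assms(2) by auto
  have U: "U \<in> carrier_mat m m" and V: "V \<in> carrier_mat n n" using svd unfolding is_svd_def by auto
  have NL: "\<And>W. W \<in> normal_L m n l A \<Longrightarrow> W \<in> carrier_mat m n \<and>
      (\<exists>y. \<forall>p<m. \<forall>q<n. W $$ (p,q) = (\<Sum>i<l. y i * A i $$ (p,q)))"
    unfolding normal_L_def by auto
  have zero_from: "W = 0\<^sub>m m n" if "W \<in> carrier_mat m n"
     "\<forall>p<m. \<forall>q<n. W $$ (p,q) = (\<Sum>i<l. y i * A i $$ (p,q))" "\<forall>i<l. y i = 0" for W y
    using that by (intro eq_matI) auto
  show ?thesis
  proof (intro conjI impI allI)
    assume ind: "mats_lin_indep m n l (\<lambda>i. T_mat m n s U V (A i))"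
    show "mordukhovich_normal m n (low_rank_set m n r) X \<inter> normal_L m n l A = {0\<^sub>m m n}"
    proof
      show "{0\<^sub>m m n} \<subseteq> mordukhovich_normal m n (low_rank_set m n r) X \<inter> normal_L m n l A"
        using zero_in_mord[OF Xlr Xc] zero_in_normal_L by auto
      show "mordukhovich_normal m n (low_rank_set m n r) X \<inter> normal_L m n l A \<subseteq> {0\<^sub>m m n}"
      proof
        fix W assume W: "W \<in> mordukhovich_normal m n (low_rank_set m n r) X \<inter> normal_L m n l A"
        then have Wm: "W \<in> mordukhovich_normal m n (low_rank_set m n r) X" by auto
        obtain y where Wc: "W \<in> carrier_mat m n" and Wy: "\<forall>p<m. \<forall>q<n. W $$ (p,q) = (\<Sum>i<l. y i * A i $$ (p,q))"
          using NL W by blast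
        have P0: "\<forall>i<s. \<forall>q<n. (transpose_mat U * W) $$ (i,q) = 0"
          and Q0: "\<forall>p<m. \<forall>i<s. (W * V) $$ (p,i) = 0"
          using svd_kill[OF svd sn nm Wc mord_conditions[OF Wm]] by auto
        have "\<forall>a<m. \<forall>b<n. (\<Sum>i<l. y i * T_mat m n s U V (A i) $$ (a,b)) = 0"
        proof (intro allI impI)
          fix a b assume a: "a < m" and b: "b < n"
          show "(\<Sum>i<l. y i * T_mat m n s U V (A i) $$ (a,b)) = 0"
          proof (cases "a < s \<or> b < s")
            case True
            have "(\<Sum>i<l. y i * T_mat m n s U V (A i) $$ (a,b)) = (\<Sum>i<l. y i * (transpose_mat U * A i * V) $$ (a,b))"
              using T_mat_index[OF U V Ac[rule_format] sn nm a b] True by (intro sum.cong refl) simp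
            also have "\<dots> = (transpose_mat U * W * V) $$ (a,b)"
              by (rule lin_entry[OF U V Wc Ac Wy a b, symmetric])
            also have "\<dots> = 0"
            proof (cases "a < s")
              case True
              have "(transpose_mat U * W * V) $$ (a,b) = (\<Sum>t<n. (transpose_mat U * W) $$ (a,t) * V $$ (t,b))"
                by (rule mult_index_sum[of _ m n]) (use U Wc V a b in auto)
              also have "\<dots> = 0" using P0 True by simp
              finally show ?thesis .
            next
              case False
              then have bs: "b < s" using \<open>a < s \<or> b < s\<close> by auto
              have "(transpose_mat U * W * V) $$ (a,b) = (transpose_mat U * (W * V)) $$ (a,b)"
                by (subst assoc_mult_mat[of _ m m _ n _ n]) (use U Wc V in auto)
              also have "\<dots> = (\<Sum>t<m. transpose_mat U $$ (a,t) * (W * V) $$ (t,b))"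
                by (rule mult_index_sum[of _ m m]) (use U Wc V a b in auto)
              also have "\<dots> = 0" using Q0 bs by simp
              finally show ?thesis .
            qed
            finally show ?thesis .
          next
            case False
            then show ?thesis using T_mat_index[OF U V Ac[rule_format] sn nm a b] by simp
          qed
        qed
        then have "\<forall>i<l. y i = 0" using ind unfolding mats_lin_indep_def by blast
        then show "W \<in> {0\<^sub>m m n}" using zero_from[OF Wc Wy] by simp
      qed
    qed
  next
    fix J
    assume ind: "mats_lin_indep m s l (\<lambda>i. R_mat s U V (A i))"
      and J: "J \<subseteq> {0..<n} \<and> {0..<s} \<subseteq> J"
    have cardJ: "card {j. j < n \<and> j \<in> J} = card J" using J card_J_cols by blast
    have "dim_col (cols_sub V J) = card J" using cols_sub_dims(2)[OF V, of J] cardJ by (rule trans)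
    then have VJ: "cols_sub V J \<in> carrier_mat n (card J)"
      by (intro carrier_matI cols_sub_dims(1)[OF V])
    have sJ: "s \<le> card J" using J card_mono[of J "{0..<s}"] finite_subset[of J "{0..<n}"] by auto
    have VJe: "\<forall>q<n. cols_sub V J $$ (q,k) = V $$ (q,k)" if "k < s" for k
    proof (intro allI impI)
      fix q assume q: "q < n"
      have "k < card {j. j < n \<and> j \<in> J}" unfolding cardJ using that sJ by simp
      from cols_sub_index[OF V q this] pick_prefix[of s J k] J that
      show "cols_sub V J $$ (q,k) = V $$ (q,k)" by simp
    qed
    have VG: "cols_sub V {0..<s} \<in> carrier_mat n s"
      using cols_sub_int_carrier[OF V, of s 0] sn by simp
    have VGe: "\<forall>q<n. cols_sub V {0..<s} $$ (q,k) = V $$ (q,k)" if "k < s" for k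
      using cols_sub_int_index[OF V, of s _ k 0] that sn by simp
    have Uall: "\<forall>p<m. U $$ (p,a) = U $$ (p,a)" for a by simp
    show "normal_MXJ m n U V J \<inter> normal_L m n l A = {0\<^sub>m m n}"
    proof
      have "transpose_mat U * 0\<^sub>m m n = 0\<^sub>m m n" by (rule right_mult_zero_mat) (use U in auto)
      then have "transpose_mat U * 0\<^sub>m m n * cols_sub V J = 0\<^sub>m m (card J)"
        using left_mult_zero_mat[OF VJ, of m] by simp
      then show "{0\<^sub>m m n} \<subseteq> normal_MXJ m n U V J \<inter> normal_L m n l A"
        unfolding normal_MXJ_def using zero_in_normal_L by auto
      show "normal_MXJ m n U V J \<inter> normal_L m n l A \<subseteq> {0\<^sub>m m n}"
      proof
        fix W assume W: "W \<in> normal_MXJ m n U V J \<inter> normal_L m n l A"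
        obtain y where Wc: "W \<in> carrier_mat m n" and Wy: "\<forall>p<m. \<forall>q<n. W $$ (p,q) = (\<Sum>i<l. y i * A i $$ (p,q))"
          using NL W by blast
        have WJ: "transpose_mat U * W * cols_sub V J = 0\<^sub>m m (card J)" using W unfolding normal_MXJ_def by auto
        have "\<forall>a<m. \<forall>b<s. (\<Sum>i<l. y i * R_mat s U V (A i) $$ (a,b)) = 0"
        proof (intro allI impI)
          fix a b assume a: "a < m" and b: "b < s"
          have bn: "b < n" using b sn by auto
          have "(\<Sum>i<l. y i * R_mat s U V (A i) $$ (a,b)) = (\<Sum>i<l. y i * (transpose_mat U * A i * V) $$ (a,b))"
            unfolding R_mat_def using prod_sub_index[OF U U Uall a a V VG VGe[OF b] b bn] Ac
            by (intro sum.cong refl) auto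
          also have "\<dots> = (transpose_mat U * W * V) $$ (a,b)"
            by (rule lin_entry[OF U V Wc Ac Wy a bn, symmetric])
          also have "\<dots> = (transpose_mat U * W * cols_sub V J) $$ (a,b)"
            by (rule prod_sub_index[OF U U Uall a a V VJ VJe[OF b] _ bn Wc, symmetric]) (use b sJ in auto)
          also have "\<dots> = 0" unfolding WJ using a b sJ by simp
          finally show "(\<Sum>i<l. y i * R_mat s U V (A i) $$ (a,b)) = 0" .
        qed
        then have "\<forall>i<l. y i = 0" using ind unfolding mats_lin_indep_def by blast
        then show "W \<in> {0\<^sub>m m n}" using zero_from[OF Wc Wy] by simp
      qed
    qed
  qed
qed

end
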